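(* Consider the OCP and its QP reformulation as in the context, with symmetry group $\mathcal G$ and orbits $\mathcal O(\mathcal A)$ of active sets $\mathcal A\subseteq\mathcal Q$. If an active set $\mathcal{A}\subseteq\mathcal Q$ is non-primary, then every element of $\mathcal{D}(\mathcal{A})=\{\mathcal{A}\cup\hat{\mathcal{A}} : \hat{\mathcal{A}}\subseteq\{\max(\mathcal{A})+1,\dots,q\}\}$ is non-primary.
   Context: The OCP: $\min\ \|x(N)\|_P^2+\sum_{k=0}^{N-1}(\|x(k)\|_Q^2+\|u(k)\|_R^2)$ subject to $x(k+1)=Ax(k)+Bu(k)$, $u(k)\in\mathcal{U}$, $x(k)\in\mathcal{X}$ ($k=0,\dots,N-1$), $x(N)\in\mathcal{T}$, with $\mathcal{U},\mathcal{X},\mathcal{T}$ compact full-dimensional polytopes containing the origin in their interiors, each given by its irredundant halfspace representation with right-hand side 1. Eliminating states gives constraints $GU\le Ex(0)+1^q$ indexed by $\mathcal Q=\{1,\dots,q\}$. The OCP is symmetric to an invertible pair $(\Theta,\Omega)$ if $\Theta A=A\Theta$, $\Theta B=B\Omega$, $\Theta\mathcal{X}=\mathcal{X}$, $\Omega\mathcal{U}=\mathcal{U}$, $\Theta\mathcal{T}=\mathcal{T}$, $\Theta^TQ\Theta=Q$, $\Omega^TR\Omega=R$, $\Theta^TP\Theta=P$; $\mathcal G$ is the set of all such pairs (a group under pairwise multiplication). For $(\Theta,\Omega)\in\mathcal G$, $\pi^{(\Theta,\Omega)}$ is the permutation of $\mathcal Q$ mapping $i$ to the (assumed unique) $j$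 with $G_{\{i\}}=G_{\{j\}}(I^N\otimes\Omega)$, $E_{\{i\}}=E_{\{j\}}\Theta$; $\Pi^{(\Theta,\Omega)}(\mathcal A)=\{\pi^{(\Theta,\Omega)}(i):i\in\mathcal A\}$; the orbit of $\mathcal A\subseteq\mathcal Q$ is $\mathcal O(\mathcal A)=\{\Pi^{(\Theta,\Omega)}(\mathcal A):(\Theta,\Omega)\in\mathcal G\}$. The primary active set of an orbit $\mathcal O$ is the $\mathcal A\in\mathcal O$ such that $\min(\mathcal A\setminus\mathring{\mathcal A})<\min(\mathring{\mathcal A}\setminus\mathcal A)$ for all $\mathring{\mathcal A}\in\mathcal O\setminus\{\mathcal A\}$ (the lexicographically smallest element); an active set is non-primary if it is not the primary active set of its orbit. For $\mathcal A=\emptyset$, $\max(\mathcal A)$ is taken as $0$. *)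

theory Defs
  imports "HOL-Analysis.Analysis"
begin

primrec mpow :: "real^'n^'n \<Rightarrow> nat \<Rightarrow> real^'n^'n" where
  "mpow M 0 = mat 1"
| "mpow M (Suc k) = M ** mpow M k"

definition hpoly :: "(real^'n) list \<Rightarrow> (real^'n) set" where
  "hpoly H = {x. \<forall>h\<in>set H. h \<bullet> x \<le> 1}"

definition irredundant :: "(real^'n) list \<Rightarrow> bool" where
  "irredundant H \<longleftrightarrow> (\<forall>i<length H. hpoly (take i H @ drop (Suc i) H) \<noteq> hpoly H)"

definition good_polytope_rep :: "(real^'n) list \<Rightarrow> bool" where
  "good_polytope_rep H \<longleftrightarrow> compact (hpoly H) \<and> 0 \<in> interior (hpoly H) \<and> irredundant H"

(* Rows (cs) of the condensed constraints  G U <= E x(0) + 1.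
   A row is a pair (g, e): g k is the block of G multiplying u(k) (k < N),
   e is the corresponding row of E.
   Ordering: for k = 0..N-1 first the input constraints Hu u(k) <= 1, then
   the state constraints Hx x(k) <= 1; finally the terminal constraints Ht x(N) <= 1.
   With x(k) = A^k x0 + sum_{j<k} A^(k-1-j) B u(j):
     h . x(k) <= 1  <=>  sum_{j<k} (h v* (A^(k-1-j) B)) . u(j) <= -(h v* A^k) . x0 + 1. *)
definition input_rows :: "(real^'m) list \<Rightarrow> nat \<Rightarrow> ((nat \<Rightarrow> real^'m) \<times> (real^'n)) list" where
  "input_rows Hu k = map (\<lambda>h. (\<lambda>j. if j = k then h else 0, 0)) Hu"

definition state_rows :: "real^'n^'n \<Rightarrow> real^'m^'n \<Rightarrow> (real^'n) list \<Rightarrow> nat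
    \<Rightarrow> ((nat \<Rightarrow> real^'m) \<times> (real^'n)) list" where
  "state_rows A B H k = map (\<lambda>h. (\<lambda>j. if j < k then h v* (mpow A (k - 1 - j) ** B) else 0,
                                    - (h v* mpow A k))) H"

definition qp_rows :: "real^'n^'n \<Rightarrow> real^'m^'n \<Rightarrow> (real^'m) list \<Rightarrow> (real^'n) list
    \<Rightarrow> (real^'n) list \<Rightarrow> nat \<Rightarrow> ((nat \<Rightarrow> real^'m) \<times> (real^'n)) list" where
  "qp_rows A B Hu Hx Ht N =
     concat (map (\<lambda>k. input_rows Hu k @ state_rows A B Hx k) [0..<N]) @ state_rows A B Ht N"

(* the constraint index set Q = {1..q}; row i of G (resp. E) *)
definition Gr :: "((nat \<Rightarrow> real^'m) \<times> (real^'n)) list \<Rightarrow> nat \<Rightarrow> nat \<Rightarrow> real^'m" where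
  "Gr cs i = fst (cs ! (i - 1))"

definition Er :: "((nat \<Rightarrow> real^'m) \<times> (real^'n)) list \<Rightarrow> nat \<Rightarrow> real^'n" where
  "Er cs i = snd (cs ! (i - 1))"

definition sym_group :: "real^'n^'n \<Rightarrow> real^'m^'n \<Rightarrow> (real^'m) list \<Rightarrow> (real^'n) list
    \<Rightarrow> (real^'n) list \<Rightarrow> real^'n^'n \<Rightarrow> real^'m^'m \<Rightarrow> real^'n^'n
    \<Rightarrow> ((real^'n^'n) \<times> (real^'m^'m)) set" where
  "sym_group A B Hu Hx Ht Qm Rm Pm =
     {(\<Theta>, \<Omega>). invertible \<Theta> \<and> invertible \<Omega> \<and>
        \<Theta> ** A = A ** \<Theta> \<and> \<Theta> ** B = B ** \<Omega> \<and>
        (\<lambda>x. \<Theta> *v x) ` hpoly Hx = hpoly Hx \<and>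
        (\<lambda>u. \<Omega> *v u) ` hpoly Hu = hpoly Hu \<and>
        (\<lambda>x. \<Theta> *v x) ` hpoly Ht = hpoly Ht \<and>
        transpose \<Theta> ** Qm ** \<Theta> = Qm \<and>
        transpose \<Omega> ** Rm ** \<Omega> = Rm \<and>
        transpose \<Theta> ** Pm ** \<Theta> = Pm}"

definition row_map :: "((nat \<Rightarrow> real^'m) \<times> (real^'n)) list \<Rightarrow> nat
    \<Rightarrow> (real^'n^'n) \<times> (real^'m^'m) \<Rightarrow> nat \<Rightarrow> nat \<Rightarrow> bool" where
  "row_map cs N g i j \<longleftrightarrow>
     (\<forall>k<N. Gr cs i k = Gr cs j k v* snd g) \<and> Er cs i = Er cs j v* fst g"

definition perm_of :: "((nat \<Rightarrow> real^'m) \<times> (real^'n)) list \<Rightarrow> nat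
    \<Rightarrow> (real^'n^'n) \<times> (real^'m^'m) \<Rightarrow> nat \<Rightarrow> nat" where
  "perm_of cs N g i = (THE j. j \<in> {1..length cs} \<and> row_map cs N g i j)"

definition orbit :: "((nat \<Rightarrow> real^'m) \<times> (real^'n)) list \<Rightarrow> nat
    \<Rightarrow> ((real^'n^'n) \<times> (real^'m^'m)) set \<Rightarrow> nat set \<Rightarrow> nat set set" where
  "orbit cs N Grp S = {perm_of cs N g ` S | g. g \<in> Grp}"

definition primary :: "nat set set \<Rightarrow> nat set \<Rightarrow> bool" where
  "primary Orb S \<longleftrightarrow> S \<in> Orb \<and> (\<forall>S' \<in> Orb - {S}. Min (S - S') < Min (S' - S))"

definition maxz :: "nat set \<Rightarrow> nat" where
  "maxz S = (if S = {} then 0 else Max S)"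

definition Dset :: "nat \<Rightarrow> nat set \<Rightarrow> nat set set" where
  "Dset q S = {S \<union> T | T. T \<subseteq> {maxz S + 1..q}}"

end

theory Submission
  imports Defs
begin

lemma id_in_grp: "(mat 1, mat 1) \<in> sym_group A B Hu Hx Ht Qm Rm Pm"
proof -
  have "invertible (mat 1 :: real^'n^'n)" by (simp add: invertible_def)
  moreover have "invertible (mat 1 :: real^'m^'m)" by (simp add: invertible_def)
  ultimately show ?thesis unfolding sym_group_def by simp
qed

lemma theorem4_aux:
  fixes cs :: "((nat \<Rightarrow> real^'m) \<times> (real^'n)) list" and q N Grp and S :: "nat set"
  assumes q: "q = length cs"
    and idg: "(mat 1, mat 1) \<in> Grp"
    and unique: "\<forall>g\<in>Grp. \<forall>i\<in>{1..q}. \<exists>!j. j \<in> {1..q} \<and> row_map cs N g i j"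
    and S_sub: "S \<subseteq> {1..q}"
    and nonprim: "\<not> primary (orbit cs N Grp S) S"
  shows "\<forall>S'\<in>Dset q S. \<not> primary (orbit cs N Grp S') S'"
proof -
  have pm: "perm_of cs N g i \<in> {1..q} \<and> row_map cs N g i (perm_of cs N g i)"
    if "g \<in> Grp" "i \<in> {1..q}" for g i
  proof -
    have "\<exists>!j. j \<in> {1..q} \<and> row_map cs N g i j" using unique that by blast
    from theI'[OF this] show ?thesis unfolding perm_of_def q by simp
  qed
  have idrm: "row_map cs N (mat 1, mat 1) i i" for i
    unfolding row_map_def by simp
  have pid: "perm_of cs N (mat 1, mat 1) i = i" if "i \<in> {1..q}" for i
  proof -
    have "\<exists>!j. j \<in> {1..q} \<and> row_map cs N (mat 1, mat 1) i j" using unique idg that by blast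
    then show ?thesis using pm[OF idg that] idrm that by blast
  qed
  have inj: "inj_on (perm_of cs N g) {1..q}" if g: "g \<in> Grp" for g
  proof (rule inj_onI)
    fix i i' assume i: "i \<in> {1..q}" and i': "i' \<in> {1..q}" and eq: "perm_of cs N g i = perm_of cs N g i'"
    have "row_map cs N (mat 1, mat 1) i i'"
      using pm[OF g i] pm[OF g i'] eq unfolding row_map_def by simp
    moreover have "\<exists>!j. j \<in> {1..q} \<and> row_map cs N (mat 1, mat 1) i j" using unique idg i by blast
    ultimately show "i = i'" using idrm i i' by blast
  qed
  have SinO: "S \<in> orbit cs N Grp S"
  proof -
    have "perm_of cs N (mat 1, mat 1) ` S = S"
      using pid S_sub by (simp add: subset_iff)
    then show ?thesis unfolding orbit_def using idg by blast
  qed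
  then obtain S' where S'O: "S' \<in> orbit cs N Grp S" and ne: "S' \<noteq> S"
    and nl: "\<not> Min (S - S') < Min (S' - S)"
    using nonprim unfolding primary_def by blast
  from S'O obtain g where g: "g \<in> Grp" and S'def: "S' = perm_of cs N g ` S"
    unfolding orbit_def by blast
  let ?p = "perm_of cs N g"
  have finS: "finite S" using S_sub finite_subset by blast
  have cardS': "card S' = card S" unfolding S'def
    using card_image inj_on_subset[OF inj[OF g] S_sub] by blast
  have finS': "finite S'" unfolding S'def using finS by simp
  have ne1: "S - S' \<noteq> {}"
  proof
    assume "S - S' = {}" then have "S \<subseteq> S'" by blast
    then show False using card_subset_eq[OF finS'] cardS' ne by metis
  qed
  have ne2: "S' - S \<noteq> {}"
  proof
    assume "S' - S = {}" then have "S' \<subseteq> S" by blast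
    then show False using card_subset_eq[OF finS] cardS' ne by metis
  qed
  define m where "m = Min (S' - S)"
  have mIn: "m \<in> S' - S" unfolding m_def using ne2 finS' by (intro Min_in) auto
  define m2 where "m2 = Min (S - S')"
  have m2In: "m2 \<in> S - S'" unfolding m2_def using ne1 finS by (intro Min_in) auto
  have m2le: "\<forall>x \<in> S - S'. m2 \<le> x" unfolding m2_def using finS by auto
  have "m \<noteq> m2" using mIn m2In by blast
  then have mlt: "m < m2" using nl unfolding m_def m2_def by simp
  have maxS: "m2 \<le> maxz S" unfolding maxz_def using m2In finS by auto
  show ?thesis
  proof
    fix U assume "U \<in> Dset q S"
    then obtain T where U: "U = S \<union> T" and T: "T \<subseteq> {maxz S + 1..q}"
      unfolding Dset_def by blast
    have Usub: "U \<subseteq> {1..q}" using U T S_sub by auto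
    have finU: "finite U" using Usub finite_subset by blast
    define U' where "U' = ?p ` U"
    have U'O: "U' \<in> orbit cs N Grp U" unfolding orbit_def U'_def using g by blast
    have cardU': "card U' = card U" unfolding U'_def
      using card_image inj_on_subset[OF inj[OF g] Usub] by blast
    have finU': "finite U'" unfolding U'_def using finU by simp
    have mU': "m \<in> U' - U"
    proof -
      have "m \<in> U'" using mIn unfolding S'def U'_def U by auto
      moreover have "m \<notin> T" using T mlt maxS by auto
      ultimately show ?thesis using mIn U by auto
    qed
    have neU: "U' \<noteq> U" using mU' by blast
    have ne3: "U - U' \<noteq> {}"
    proof
      assume "U - U' = {}" then have "U \<subseteq> U'" by blast
      then show False using card_subset_eq[OF finU'] cardU' neU by metis
    qed
    have big: "\<forall>x \<in> U - U'. m < x"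
    proof
      fix x assume x: "x \<in> U - U'"
      show "m < x"
      proof (cases "x \<in> T")
        case True then show ?thesis using T mlt maxS by auto
      next
        case False
        then have "x \<in> S" using x U by auto
        moreover have "x \<notin> S'" using x unfolding U'_def S'def U by auto
        ultimately have "m2 \<le> x" using m2le by blast
        then show ?thesis using mlt by simp
      qed
    qed
    have "Min (U - U') \<in> U - U'" using ne3 finU by (intro Min_in) auto
    then have "m < Min (U - U')" using big by blast
    moreover have "Min (U' - U) \<le> m" using mU' finU' by (intro Min_le) auto
    ultimately have "\<not> Min (U - U') < Min (U' - U)" by simp
    then show "\<not> primary (orbit cs N Grp U) U"
      unfolding primary_def using U'O neU by blast
  qed
qed

theorem theorem4:
  fixes A :: "real^'n^'n" and B :: "real^'m^'n"
    and Qm Pm :: "real^'n^'n" and Rm :: "real^'m^'m"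
    and Hu :: "(real^'m) list" and Hx Ht :: "(real^'n) list"
    and N :: nat and S :: "nat set"
  defines "cs \<equiv> qp_rows A B Hu Hx Ht N"
  defines "q \<equiv> length cs"
  defines "Grp \<equiv> sym_group A B Hu Hx Ht Qm Rm Pm"
  assumes polyU: "good_polytope_rep Hu"
    and polyX: "good_polytope_rep Hx"
    and polyT: "good_polytope_rep Ht"
    and unique: "\<forall>g\<in>Grp. \<forall>i\<in>{1..q}. \<exists>!j. j \<in> {1..q} \<and> row_map cs N g i j"
    and S_sub: "S \<subseteq> {1..q}"
    and nonprim: "\<not> primary (orbit cs N Grp S) S"
  shows "\<forall>S'\<in>Dset q S. \<not> primary (orbit cs N Grp S') S'"
  by (rule theorem4_aux[OF _ _ unique S_sub nonprim])
     (simp_all add: q_def Grp_def id_in_grp)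

end
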